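(* Let $\mathcal A$ be a causal linear time-invariant algorithm with state-space realization $(A,B,C,D)$ whose oracles are (sub)gradients, and let $i\ne j$ be oracle indices with $D_{ii}\ne0$ and $D_{jj}\ne0$. Then $\mathcal C_i\mathcal C_j\mathcal A=\mathcal C_j\mathcal C_i\mathcal A=\mathcal C_{\{i,j\}}\mathcal A$.
   Context: A linear time-invariant algorithm generates $x^{k+1}=Ax^k+Bu^k$, $y^k=Cx^k+Du^k$, $u^k=\phi(y^k)$, with oracles $\partial f_1,\dots,\partial f_n$ (subgradients of convex functions) called in the order $1,\dots,n$ each iteration; causality means each oracle call depends only on previously computed quantities, so $D$ (indexed blockwise by oracles in call order) is lower triangular. For a set $\kappa$ of oracle indices, $\mathcal C_\kappa\mathcal A$ is the algorithm obtained by rewriting $\mathcal A$ to call $\partial f_i^\star=(\partial f_i)^{-1}$ ($f^\star$ the Fenchel conjugate) instead of $\partial f_i$ for $i\in\kappa$; $\mathcal C_i=\mathcal C_{\{i\}}$. Algorithms are compared via their transfer functions $C(zI-A)^{-1}B+D$. *)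

theory Defs
  imports "HOL-Analysis.Analysis"
begin

text \<open>A linear time-invariant algorithm given by a state-space realization (A,B,C,D):
  x(k+1) = A x(k) + B u(k),  y(k) = C x(k) + D u(k),  u(k) = phi(y(k)).
  The state space is indexed by the finite type 's, the oracles by the finite
  linearly ordered type 'm (the order is the call order of the oracles).\<close>

datatype ('s, 'm) lti = LTI
  (sA: "real^'s^'s") (sB: "real^'m^'s") (sC: "real^'s^'m") (sD: "real^'m^'m")

definition causal :: "('s::finite, 'm::{finite,linorder}) lti \<Rightarrow> bool" where
  "causal R \<longleftrightarrow> (\<forall>p q. p < q \<longrightarrow> sD R $ p $ q = 0)"

text \<open>R' is a realization of the algorithm obtained from R by calling the
  conjugate oracles (partial f_k)^{-1} for k in kappa instead of partial f_k:
  for these oracles the roles of oracle input y_k and output u_k are swapped,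
  while the state and all other quantities are computed as before.\<close>
definition is_conj :: "'m set \<Rightarrow> ('s::finite, 'm::finite) lti \<Rightarrow> ('s, 'm) lti \<Rightarrow> bool" where
  "is_conj \<kappa> R R' \<longleftrightarrow>
     (\<forall>x u. let y  = sC R *v x + sD R *v u;
                u' = (\<chi> k. if k \<in> \<kappa> then y $ k else u $ k);
                y' = (\<chi> k. if k \<in> \<kappa> then u $ k else y $ k)
            in sA R' *v x + sB R' *v u' = sA R *v x + sB R *v u
             \<and> sC R' *v x + sD R' *v u' = y')"

definition conj_defined :: "'m set \<Rightarrow> ('s::finite, 'm::finite) lti \<Rightarrow> bool" where
  "conj_defined \<kappa> R \<longleftrightarrow> (\<exists>!R'. is_conj \<kappa> R R')"

definition conj :: "'m set \<Rightarrow> ('s::finite, 'm::finite) lti \<Rightarrow> ('s, 'm) lti" where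
  "conj \<kappa> R = (THE R'. is_conj \<kappa> R R')"

definition cmat :: "real^'b^'a \<Rightarrow> complex^'b^'a" where
  "cmat M = (\<chi> i j. complex_of_real (M $ i $ j))"

definition transfer :: "('s::finite, 'm::finite) lti \<Rightarrow> complex \<Rightarrow> complex^'m^'m" where
  "transfer R z = cmat (sC R) ** matrix_inv (mat z - cmat (sA R)) ** cmat (sB R) + cmat (sD R)"

text \<open>Two algorithms are identified when their transfer functions coincide
  (as rational functions, i.e. at every z that is not a pole of either realization).\<close>
definition same_tf :: "('s::finite, 'm::finite) lti \<Rightarrow> ('s, 'm) lti \<Rightarrow> bool" where
  "same_tf R R' \<longleftrightarrow> (\<forall>z. det (mat z - cmat (sA R)) \<noteq> 0 \<longrightarrow> det (mat z - cmat (sA R')) \<noteq> 0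
       \<longrightarrow> transfer R z = transfer R' z)"

end

theory Submission
  imports Defs
begin

lemma linI': fixes f :: "real^'n \<Rightarrow> real^'k"
  assumes "\<And>x y. f (x+y) = f x + f y" "\<And>c x. f (c *s x) = c *s f x"
  shows "Vector_Spaces.linear (*s) (*s) f"
  by (unfold_locales) (simp_all add: assms)

lemma joint_matrix:
  fixes P :: "real^'s \<Rightarrow> real^'m \<Rightarrow> real^'n"
  assumes add: "\<And>x x' w w'. P (x+x') (w+w') = P x w + P x' w'"
    and sc: "\<And>c x w. P (c *s x) (c *s w) = c *s P x w"
  shows "matrix (\<lambda>x. P x 0) *v x + matrix (\<lambda>w. P 0 w) *v w = P x w"
proof -
  have l1: "Vector_Spaces.linear (*s) (*s) (\<lambda>x. P x 0)"
    apply (rule linI')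
    using add[of _ _ 0 0] sc[of _ _ 0] by simp_all
  have l2: "Vector_Spaces.linear (*s) (*s) (\<lambda>w. P 0 w)"
    apply (rule linI')
    using add[of 0 0] sc[of _ 0] by simp_all
  show ?thesis using matrix_works[OF l1] matrix_works[OF l2] add[of x 0 0 w] by simp
qed

definition sw :: "'m set \<Rightarrow> ('s::finite,'m::finite) lti \<Rightarrow> real^'s \<Rightarrow> real^'m \<Rightarrow> real^'m" where
  "sw K R x u = (\<chi> k. if k \<in> K then (sC R *v x + sD R *v u)$k else u$k)"
definition yy :: "'m set \<Rightarrow> ('s::finite,'m::finite) lti \<Rightarrow> real^'s \<Rightarrow> real^'m \<Rightarrow> real^'m" where
  "yy K R x u = (\<chi> k. if k \<in> K then u$k else (sC R *v x + sD R *v u)$k)"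

lemma is_conj_iff: "is_conj K R R' \<longleftrightarrow> (\<forall>x u. sA R' *v x + sB R' *v sw K R x u = sA R *v x + sB R *v u
   \<and> sC R' *v x + sD R' *v sw K R x u = yy K R x u)"
  by (simp add: is_conj_def Let_def sw_def yy_def)

lemma conj_unique:
  assumes surj: "\<And>x w. \<exists>u. sw K R x u = w"
    and c1: "is_conj K R R1" and c2: "is_conj K R R2"
  shows "R1 = R2"
proof -
  have e: "sA R1 *v x + sB R1 *v w = sA R2 *v x + sB R2 *v w
      \<and> sC R1 *v x + sD R1 *v w = sC R2 *v x + sD R2 *v w" for x w
  proof -
    obtain u where u: "sw K R x u = w" using surj by blast
    show ?thesis using c1 c2 unfolding is_conj_iff using u by metis
  qed
  have "sA R1 = sA R2" unfolding matrix_eq using e[of _ 0] by simp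
  moreover have "sB R1 = sB R2" unfolding matrix_eq using e[of 0] by simp
  moreover have "sC R1 = sC R2" unfolding matrix_eq using e[of _ 0] by simp
  moreover have "sD R1 = sD R2" unfolding matrix_eq using e[of 0] by simp
  ultimately show ?thesis by (cases R1; cases R2) simp
qed

definition tt :: "('s::finite,'m::finite) lti \<Rightarrow> 'm \<Rightarrow> real^'s \<Rightarrow> real^'m \<Rightarrow> real" where
  "tt R k x w = (w$k - (sC R *v x)$k - (sD R *v w)$k) / sD R $ k $ k"
definition gg :: "('s::finite,'m::finite) lti \<Rightarrow> 'm \<Rightarrow> real^'s \<Rightarrow> real^'m \<Rightarrow> real^'m" where
  "gg R k x w = w + tt R k x w *s axis k 1"

lemma tt_add: "tt R k (x+x') (w+w') = tt R k x w + tt R k x' w'"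
  by (simp add: tt_def matrix_vector_right_distrib add_divide_distrib[symmetric] algebra_simps)
lemma axis_comp: "(axis k (1::real) :: real^'m) $ i = (if i = k then 1 else 0)"
  by (simp add: axis_def)
lemma gg_add: "gg R k (x+x') (w+w') = gg R k x w + gg R k x' w'"
  by (simp add: gg_def tt_add vec_eq_iff algebra_simps)
lemma gg_scale: "gg R k (c *s x) (c *s w) = c *s gg R k x w"
  by (simp add: gg_def tt_def algebra_simps vec_eq_iff scalar_mult_eq_scaleR)

lemma mv_axis: "((M::real^'n^'m) *v (c *s axis k 1)) $ i = c * M $ i $ k"
  by (simp add: matrix_vector_mult_def axis_def if_distrib cong: if_cong; simp add: ac_simps)

lemma sw_gg: assumes "sD R $ k $ k \<noteq> 0" shows "sw {k} R x (gg R k x w) = w"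
  using assms by (auto simp: sw_def gg_def tt_def vec_eq_iff matrix_vector_right_distrib mv_axis axis_comp field_simps)

lemma sw_comp: "sw {k} R x u $ i = (if i = k then (sC R *v x + sD R *v u) $ k else u $ i)"
  by (simp add: sw_def)

lemma sw_diff: "sw {k} R x u = u + ((sC R *v x + sD R *v u) $ k - u $ k) *s axis k 1"
  by (auto simp: sw_comp vec_eq_iff axis_comp)

lemma gg_sw: assumes d: "sD R $ k $ k \<noteq> 0" shows "gg R k x (sw {k} R x u) = u"
proof -
  define y where "y = (sC R *v x + sD R *v u) $ k"
  have sd: "sw {k} R x u = u + (y - u $ k) *s axis k 1" by (simp add: sw_diff y_def)
  have "(sD R *v sw {k} R x u) $ k = (sD R *v u) $ k + (y - u $ k) * sD R $ k $ k"
    unfolding sd by (simp add: matrix_vector_right_distrib mv_axis matrix_vector_mult_diff_distrib left_diff_distrib)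
  moreover have "sw {k} R x u $ k = y" by (simp add: sw_comp y_def)
  ultimately have "tt R k x (sw {k} R x u) = u $ k - y"
    using d by (simp add: tt_def y_def field_simps)
  then show ?thesis by (simp add: gg_def sd vec_eq_iff axis_comp)
qed


definition FF :: "('s::finite,'m::finite) lti \<Rightarrow> 'm \<Rightarrow> real^'s \<Rightarrow> real^'m \<Rightarrow> real^'s" where
  "FF R k x w = sA R *v x + sB R *v gg R k x w"
definition HH :: "('s::finite,'m::finite) lti \<Rightarrow> 'm \<Rightarrow> real^'s \<Rightarrow> real^'m \<Rightarrow> real^'m" where
  "HH R k x w = yy {k} R x (gg R k x w)"
definition RR :: "('s::finite,'m::finite) lti \<Rightarrow> 'm \<Rightarrow> ('s,'m) lti" where
  "RR R k = LTI (matrix (\<lambda>x. FF R k x 0)) (matrix (\<lambda>w. FF R k 0 w))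
                (matrix (\<lambda>x. HH R k x 0)) (matrix (\<lambda>w. HH R k 0 w))"

lemma yy_add: "yy K R (x+x') (u+u') = yy K R x u + yy K R x' u'"
  by (simp add: yy_def vec_eq_iff matrix_vector_right_distrib)
lemma yy_scale: "yy K R (c *s x) (c *s u) = c *s yy K R x u"
  by (simp add: yy_def vec_eq_iff scalar_mult_eq_scaleR matrix_vector_mult_scaleR algebra_simps)

lemma FF_add: "FF R k (x+x') (w+w') = FF R k x w + FF R k x' w'"
  by (simp add: FF_def gg_add matrix_vector_right_distrib)
lemma FF_scale: "FF R k (c *s x) (c *s w) = c *s FF R k x w"
  by (simp add: FF_def gg_scale[unfolded scalar_mult_eq_scaleR] scalar_mult_eq_scaleR matrix_vector_mult_scaleR algebra_simps)
lemma HH_add: "HH R k (x+x') (w+w') = HH R k x w + HH R k x' w'"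
  by (simp add: HH_def gg_add yy_add)
lemma HH_scale: "HH R k (c *s x) (c *s w) = c *s HH R k x w"
  by (simp add: HH_def gg_scale yy_scale)

lemma RR_conj: assumes d: "sD R $ k $ k \<noteq> 0" shows "is_conj {k} R (RR R k)"
  unfolding is_conj_iff
proof (intro allI conjI)
  fix x u
  show "sA (RR R k) *v x + sB (RR R k) *v sw {k} R x u = sA R *v x + sB R *v u"
    using joint_matrix[of "FF R k", OF FF_add FF_scale, of x "sw {k} R x u"]
    by (simp add: RR_def FF_def gg_sw[OF d])
  show "sC (RR R k) *v x + sD (RR R k) *v sw {k} R x u = yy {k} R x u"
    using joint_matrix[of "HH R k", OF HH_add HH_scale, of x "sw {k} R x u"]
    by (simp add: RR_def HH_def gg_sw[OF d])
qed

lemma sing_surj: assumes d: "sD R $ k $ k \<noteq> 0" shows "\<exists>u. sw {k} R x u = w"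
  using sw_gg[OF d] by blast

lemma sing_defined: assumes d: "sD R $ k $ k \<noteq> 0"
  shows "conj_defined {k} R" and "conj {k} R = RR R k"
proof -
  show "conj_defined {k} R" unfolding conj_defined_def
    using RR_conj[OF d] conj_unique[OF sing_surj[OF d]] by blast
  show "conj {k} R = RR R k" unfolding conj_def
    using RR_conj[OF d] conj_unique[OF sing_surj[OF d]] by blast
qed

lemma RR_D: assumes c: "causal R" and ik: "i \<noteq> k" and d: "sD R $ k $ k \<noteq> 0"
  shows "sD (RR R k) $ i $ i = sD R $ i $ i"
proof -
  have e: "sD R $ i $ k * sD R $ k $ i = 0"
    using c ik unfolding causal_def by (cases "i < k") (auto simp: not_less_iff_gr_or_eq)
  have "sD (RR R k) $ i $ i = HH R k 0 (axis i 1) $ i" by (simp add: RR_def matrix_def)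
  also have "\<dots> = (sD R *v (axis i 1 + tt R k 0 (axis i 1) *s axis k 1)) $ i"
    using ik by (simp add: HH_def yy_def gg_def)
  also have "\<dots> = sD R $ i $ i + tt R k 0 (axis i 1) * sD R $ i $ k"
    using mv_axis[of "sD R" 1 i i] by (simp add: matrix_vector_right_distrib mv_axis)
  also have "tt R k 0 (axis i 1) = - sD R $ k $ i / sD R $ k $ k"
    using ik mv_axis[of "sD R" 1 i k] by (simp add: tt_def axis_comp)
  finally show ?thesis using e by (simp add: field_simps)
qed

lemma sw_compose:
  assumes ij: "i \<noteq> j" and b1: "sC R1 *v x + sD R1 *v sw {j} R x u = yy {j} R x u"
  shows "sw {i} R1 x (sw {j} R x u) = sw {i, j} R x u"
  using ij b1 by (auto simp: sw_def yy_def vec_eq_iff)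

lemma compose_conj:
  assumes ij: "i \<noteq> j" and c1: "is_conj {j} R R1" and c2: "is_conj {i} R1 R2"
  shows "is_conj {i, j} R R2"
  unfolding is_conj_iff
proof (intro allI)
  fix x u
  have a1: "sA R1 *v x + sB R1 *v sw {j} R x u = sA R *v x + sB R *v u"
   and b1: "sC R1 *v x + sD R1 *v sw {j} R x u = yy {j} R x u"
    using c1 unfolding is_conj_iff by blast+
  have a2: "sA R2 *v x + sB R2 *v sw {i} R1 x (sw {j} R x u) = sA R1 *v x + sB R1 *v sw {j} R x u"
   and b2: "sC R2 *v x + sD R2 *v sw {i} R1 x (sw {j} R x u) = yy {i} R1 x (sw {j} R x u)"
    using c2 unfolding is_conj_iff by blast+
  have s: "sw {i} R1 x (sw {j} R x u) = sw {i, j} R x u"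
    using ij b1 by (auto simp: sw_def yy_def vec_eq_iff)
  have y: "yy {i} R1 x (sw {j} R x u) = yy {i, j} R x u"
    using ij b1 by (auto simp: sw_def yy_def vec_eq_iff)
  show "sA R2 *v x + sB R2 *v sw {i, j} R x u = sA R *v x + sB R *v u \<and>
        sC R2 *v x + sD R2 *v sw {i, j} R x u = yy {i, j} R x u"
    using a1 a2 b2 s y by simp
qed

lemma compose_surj:
  assumes ij: "i \<noteq> j" and c1: "is_conj {j} R R1"
    and s1: "\<And>x w. \<exists>u. sw {j} R x u = w" and s2: "\<And>x w. \<exists>u. sw {i} R1 x u = w"
  shows "\<exists>u. sw {i, j} R x u = w"
proof -
  obtain v where v: "sw {i} R1 x v = w" using s2 by blast
  obtain u where u: "sw {j} R x u = v" using s1 by blast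
  have b1: "sC R1 *v x + sD R1 *v sw {j} R x u = yy {j} R x u"
    using c1 unfolding is_conj_iff by blast
  have "sw {i, j} R x u = w"
    using sw_compose[OF ij b1] v u by simp
  then show ?thesis by blast
qed

lemma same_tf_refl: "same_tf R R" by (simp add: same_tf_def)

theorem proposition8p4:
  fixes R :: "('s::finite, 'm::{finite,linorder}) lti" and i j :: 'm
  assumes "causal R"
    and "i \<noteq> j"
    and "sD R $ i $ i \<noteq> 0"
    and "sD R $ j $ j \<noteq> 0"
  shows "conj_defined {j} R \<and> conj_defined {i} (conj {j} R)
       \<and> conj_defined {i} R \<and> conj_defined {j} (conj {i} R)
       \<and> conj_defined {i, j} R
       \<and> same_tf (conj {i} (conj {j} R)) (conj {i, j} R)
       \<and> same_tf (conj {j} (conj {i} R)) (conj {i, j} R)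
       \<and> same_tf (conj {i} (conj {j} R)) (conj {j} (conj {i} R))"
proof -
  note c = assms(1) and ij = assms(2) and di = assms(3) and dj = assms(4)
  define R1 where "R1 = conj {j} R"
  define S1 where "S1 = conj {i} R"
  have R1e: "R1 = RR R j" and S1e: "S1 = RR R i" using sing_defined di dj R1_def S1_def by auto
  have R1c: "is_conj {j} R R1" using R1e RR_conj[OF dj] by simp
  have S1c: "is_conj {i} R S1" using S1e RR_conj[OF di] by simp
  have R1d: "sD R1 $ i $ i \<noteq> 0" using R1e RR_D[OF c ij dj] di by simp
  have S1d: "sD S1 $ j $ j \<noteq> 0" using S1e RR_D[OF c ij[symmetric] di] dj by simp
  define R2 where "R2 = conj {i} R1"
  define S2 where "S2 = conj {j} S1"
  have R2c: "is_conj {i} R1 R2" using R2_def sing_defined[OF R1d] RR_conj[OF R1d] by simp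
  have S2c: "is_conj {j} S1 S2" using S2_def sing_defined[OF S1d] RR_conj[OF S1d] by simp
  have R2ij: "is_conj {i, j} R R2" using compose_conj[OF ij R1c R2c] .
  have S2ij: "is_conj {i, j} R S2" using compose_conj[OF ij[symmetric] S1c S2c] by (simp add: insert_commute)
  have surj: "\<exists>u. sw {i, j} R x u = w" for x w
    using compose_surj[OF ij R1c sing_surj[OF dj] sing_surj[OF R1d]] .
  have ex1: "conj_defined {i, j} R" unfolding conj_defined_def
    using R2ij conj_unique[OF surj] by blast
  have eq: "conj {i, j} R = R2" unfolding conj_def
    using R2ij conj_unique[OF surj] by blast
  have eq2: "S2 = R2" using conj_unique[OF surj S2ij R2ij] .
  show ?thesis
    using sing_defined(1)[OF dj] sing_defined(1)[OF di] sing_defined(1)[OF R1d] sing_defined(1)[OF S1d]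
      ex1 eq eq2 same_tf_refl R1_def S1_def R2_def S2_def by simp
qed

end
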